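(* Let $A$ be a finite set of alternatives with $|A|\ge 3$, let $N=\{1,\dots,n\}$ with $n\ge 2$, and let $\mathbb{D}$ be a minimally rich domain of linear orders over $A$. If every unanimous and locally strategy-proof social choice function $f:\mathbb{D}^n\to A$ satisfies dictatorship, then $\mathbb{D}$ is connected with two distinct neighbours.
   Context: A domain is a set $\mathbb{D}$ of linear orders (strict preferences) over $A$; a preference profile is $P=(P_1,\dots,P_n)\in\mathbb{D}^n$. For a linear order $P_i$, $r_k(P_i)$ is its $k$-th ranked alternative. $\mathbb{D}$ is minimally rich if every $a\in A$ is ranked first in some $P_i\in\mathbb{D}$. Two linear orders $P_i,P_i'$ are adjacent ($P_i\sim P_i'$) if $P_i'$ is obtained from $P_i$ by swapping two consecutively ranked alternatives and leaving all other ranks unchanged. A social choice function (scf) is a map $f:\mathbb{D}^n\to A$. It is unanimous if $f(P)=a$ whenever every voter ranks $a$ first. It is locally strategy-proof if there is no voter $i$, profile $P$, and $P_i'\in\mathbb{D}$ with $P_i'\sim P_i$ such that $f(P_i',P_{-i})\,P_i\,f(P_i,P_{-i})$. It satisfies dictatorship if there is a voter $i$ with $f(P)=r_1(P_i)$ for all $P\in\mathbb{D}^n$. A path in $\mathbb{D}$ is a sequence of distinct preferences in $\mathbb{D}$ in which consecutive ones are adjacent; $\mathbb{D}$ is connected if any two of its preferences are joined by a path in $\mathbb{D}$. For $\bar{\mathbb{D}}\subseteq\mathbb{D}$, a neighbour of $\bar{\mathbb{D}}$ in $\mathbb{D}$ is a $P_i\in\mathbb{D}\setminus\bar{\mathbb{D}}$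 adjacent to some element of $\bar{\mathbb{D}}$. Two preferences $P_i,P_i'\in\mathbb{D}$ are top-connected in $\mathbb{D}$ if there is a path from $P_i$ to $P_i'$ in $\mathbb{D}$ all of whose members have the same top-ranked alternative. The top-connected closure $\mathbb{D}^{TCC}(P_i)$ is the set of preferences in $\mathbb{D}$ top-connected to $P_i$, together with $P_i$. $\mathbb{D}$ is connected with two distinct neighbours if (1) $\mathbb{D}$ is connected, and (2) for every $P_i\in\mathbb{D}$ there exist two neighbours $P_i',P_i''$ of $\mathbb{D}^{TCC}(P_i)$ in $\mathbb{D}$ with $r_1(P_i')\ne r_1(P_i'')$. *)

theory Defs
  imports Main
begin

text \<open>A linear order (strict preference) over A is represented as a list of the elements
  of A without repetition, best first: r_k(p) = p ! (k-1), r_1(p) = hd p.\<close>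

definition lin_orders :: "'a set \<Rightarrow> 'a list set" where
  "lin_orders A = {p. distinct p \<and> set p = A}"

definition top :: "'a list \<Rightarrow> 'a" where
  "top p = hd p"

definition prefers :: "'a list \<Rightarrow> 'a \<Rightarrow> 'a \<Rightarrow> bool" where
  "prefers p a b \<longleftrightarrow> (\<exists>i j. i < j \<and> j < length p \<and> p ! i = a \<and> p ! j = b)"

definition minimally_rich :: "'a set \<Rightarrow> 'a list set \<Rightarrow> bool" where
  "minimally_rich A D \<longleftrightarrow> (\<forall>a\<in>A. \<exists>p\<in>D. top p = a)"

definition adjacent :: "'a list \<Rightarrow> 'a list \<Rightarrow> bool" where
  "adjacent p q \<longleftrightarrow> (\<exists>k. Suc k < length p \<and> q = p[k := p ! Suc k, Suc k := p ! k])"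

text \<open>Profiles over voters 0..n-1 (relabelling of {1..n}): lists of length n of preferences in D.\<close>
definition profiles :: "'a list set \<Rightarrow> nat \<Rightarrow> 'a list list set" where
  "profiles D n = {P. length P = n \<and> set P \<subseteq> D}"

definition is_scf :: "'a set \<Rightarrow> 'a list set \<Rightarrow> nat \<Rightarrow> ('a list list \<Rightarrow> 'a) \<Rightarrow> bool" where
  "is_scf A D n f \<longleftrightarrow> (\<forall>P\<in>profiles D n. f P \<in> A)"

definition unanimous :: "'a list set \<Rightarrow> nat \<Rightarrow> ('a list list \<Rightarrow> 'a) \<Rightarrow> bool" where
  "unanimous D n f \<longleftrightarrow>
     (\<forall>P\<in>profiles D n. \<forall>a. (\<forall>i<n. top (P ! i) = a) \<longrightarrow> f P = a)"

definition locally_sp :: "'a list set \<Rightarrow> nat \<Rightarrow> ('a list list \<Rightarrow> 'a) \<Rightarrow> bool" where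
  "locally_sp D n f \<longleftrightarrow>
     (\<forall>P\<in>profiles D n. \<forall>i<n. \<forall>Q\<in>D. adjacent (P ! i) Q \<longrightarrow>
        \<not> prefers (P ! i) (f (P[i := Q])) (f P))"

definition dictatorial :: "'a list set \<Rightarrow> nat \<Rightarrow> ('a list list \<Rightarrow> 'a) \<Rightarrow> bool" where
  "dictatorial D n f \<longleftrightarrow> (\<exists>i<n. \<forall>P\<in>profiles D n. f P = top (P ! i))"

definition is_path :: "'a list set \<Rightarrow> 'a list list \<Rightarrow> bool" where
  "is_path D ps \<longleftrightarrow> ps \<noteq> [] \<and> distinct ps \<and> set ps \<subseteq> D \<and>
     (\<forall>k. Suc k < length ps \<longrightarrow> adjacent (ps ! k) (ps ! Suc k))"

definition dom_connected :: "'a list set \<Rightarrow> bool" where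
  "dom_connected D \<longleftrightarrow>
     (\<forall>p\<in>D. \<forall>q\<in>D. \<exists>ps. is_path D ps \<and> hd ps = p \<and> last ps = q)"

definition top_connected :: "'a list set \<Rightarrow> 'a list \<Rightarrow> 'a list \<Rightarrow> bool" where
  "top_connected D p q \<longleftrightarrow>
     (\<exists>ps. is_path D ps \<and> hd ps = p \<and> last ps = q \<and> (\<forall>x\<in>set ps. top x = top p))"

definition TCC :: "'a list set \<Rightarrow> 'a list \<Rightarrow> 'a list set" where
  "TCC D p = {q\<in>D. top_connected D p q} \<union> {p}"

definition neighbour :: "'a list set \<Rightarrow> 'a list set \<Rightarrow> 'a list \<Rightarrow> bool" where
  "neighbour D S q \<longleftrightarrow> q \<in> D - S \<and> (\<exists>s\<in>S. adjacent s q)"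

definition connected_two_neighbours :: "'a list set \<Rightarrow> bool" where
  "connected_two_neighbours D \<longleftrightarrow> dom_connected D \<and>
     (\<forall>p\<in>D. \<exists>q r. neighbour D (TCC D p) q \<and> neighbour D (TCC D p) r \<and> top q \<noteq> top r)"

end

theory Submission
  imports Defs
begin

lemma adj_len: "adjacent p q \<Longrightarrow> length q = length p"
  unfolding adjacent_def by auto

lemma adj_sym: "adjacent p q \<Longrightarrow> adjacent q p"
proof -
  assume "adjacent p q"
  then obtain k where k: "Suc k < length p" "q = p[k := p ! Suc k, Suc k := p ! k]"
    unfolding adjacent_def by auto
  show "adjacent q p" unfolding adjacent_def
  proof (intro exI conjI)
    show "Suc k < length q" using k by simp
    show "p = q[k := q ! Suc k, Suc k := q ! k]"
      using k by (auto intro!: nth_equalityI simp: nth_list_update)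
  qed
qed

lemma path_snoc:
  assumes "is_path D ps" "q \<in> D" "adjacent (last ps) q"
  shows "\<exists>ps'. is_path D ps' \<and> hd ps' = hd ps \<and> last ps' = q \<and> set ps' \<subseteq> insert q (set ps)"
proof (cases "q \<in> set ps")
  case True
  then obtain i where i: "i < length ps" "ps ! i = q" by (auto simp: in_set_conv_nth)
  have ne: "ps \<noteq> []" using assms(1) unfolding is_path_def by auto
  let ?ps = "take (Suc i) ps"
  have "is_path D ?ps"
    using assms(1) i unfolding is_path_def
    by (auto dest: in_set_takeD)
  moreover have "hd ?ps = hd ps" using ne by (cases ps) auto
  moreover have "last ?ps = q" using i
    by (metis take_Suc_conv_app_nth last_snoc)
  moreover have "set ?ps \<subseteq> insert q (set ps)" by (auto dest: in_set_takeD)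
  ultimately show ?thesis by blast
next
  case False
  have ne: "ps \<noteq> []" using assms(1) unfolding is_path_def by auto
  let ?ps = "ps @ [q]"
  have "is_path D ?ps"
    unfolding is_path_def
  proof (intro conjI allI impI)
    show "?ps \<noteq> []" by simp
    show "distinct ?ps" using False assms(1) unfolding is_path_def by auto
    show "set ?ps \<subseteq> D" using assms(1,2) unfolding is_path_def by auto
    fix k assume k: "Suc k < length ?ps"
    show "adjacent (?ps ! k) (?ps ! Suc k)"
    proof (cases "Suc k < length ps")
      case True
      then show ?thesis using assms(1) unfolding is_path_def by (auto simp: nth_append)
    next
      case False
      then have "Suc k = length ps" using k by simp
      then have kk: "k = length ps - 1" by simp
      then have "?ps ! k = last ps" "?ps ! Suc k = q"
        using ne \<open>Suc k = length ps\<close> by (auto simp: nth_append last_conv_nth)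
      then show ?thesis using assms(3) by simp
    qed
  qed
  moreover have "hd ?ps = hd ps" using ne by (cases ps) auto
  ultimately show ?thesis by auto
qed

lemma rtranclp_path:
  assumes "(\<lambda>x y. x \<in> D \<and> y \<in> D \<and> adjacent x y)\<^sup>*\<^sup>* p q" "p \<in> D"
  shows "\<exists>ps. is_path D ps \<and> hd ps = p \<and> last ps = q"
  using assms(1)
proof (induction rule: rtranclp_induct)
  case base
  have "is_path D [p]" using assms(2) unfolding is_path_def by auto
  then show ?case by force
next
  case (step y z)
  then obtain ps where "is_path D ps" "hd ps = p" "last ps = y" by auto
  with step(2) path_snoc[of D ps z] show ?case by force
qed

lemma lin_facts:
  assumes "x \<in> D" "D \<subseteq> lin_orders A" "A \<noteq> {}"
  shows "distinct x" "set x = A" "x \<noteq> []" "top x \<in> A"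
proof -
  show d: "distinct x" "set x = A" using assms unfolding lin_orders_def by auto
  then show ne: "x \<noteq> []" using assms(3) by auto
  show "top x \<in> A" unfolding top_def using ne d(2) hd_in_set by blast
qed

lemma not_prefers_top: "distinct p \<Longrightarrow> \<not> prefers p x (top p)"
  unfolding prefers_def top_def
  by (metis hd_conv_nth length_greater_0_conv less_nat_zero_code nth_eq_iff_index_eq
      order.strict_trans list.size(3) not_less0)

lemma not_prefers_refl: "distinct p \<Longrightarrow> \<not> prefers p x x"
  unfolding prefers_def
  by (metis nth_eq_iff_index_eq order.strict_trans less_irrefl)

lemma prefers_asym: "distinct p \<Longrightarrow> prefers p x y \<Longrightarrow> \<not> prefers p y x"
  unfolding prefers_def
  by (metis nth_eq_iff_index_eq order.strict_trans less_irrefl order.strict_trans1 less_imp_le)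

lemma prefers_top: "distinct p \<Longrightarrow> b \<in> set p \<Longrightarrow> b \<noteq> top p \<Longrightarrow> prefers p (top p) b"
proof -
  assume d: "distinct p" and b: "b \<in> set p" "b \<noteq> top p"
  then obtain j where j: "j < length p" "p ! j = b" by (auto simp: in_set_conv_nth)
  have ne: "p \<noteq> []" using b by auto
  have "j \<noteq> 0"
  proof
    assume "j = 0"
    then have "b = top p" using j ne by (simp add: top_def hd_conv_nth)
    then show False using b by simp
  qed
  then show ?thesis unfolding prefers_def top_def
    using j ne \<open>j \<noteq> 0\<close> by (intro exI[of _ 0] exI[of _ j]) (auto simp: hd_conv_nth)
qed

lemma prof_upd:
  assumes "r \<in> D" "q \<in> D"
  shows "(replicate n r)[i := q] \<in> profiles D n"
  unfolding profiles_def using assms set_update_subset_insert[of "replicate n r" i q]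
  by auto

lemma prof_nth: "P \<in> profiles D n \<Longrightarrow> i < n \<Longrightarrow> P ! i \<in> D"
  unfolding profiles_def by auto

lemma lsp_generic:
  assumes "\<And>P i Q. P \<in> profiles D n \<Longrightarrow> i < n \<Longrightarrow> Q \<in> D \<Longrightarrow> adjacent (P ! i) Q \<Longrightarrow>
            f (P[i := Q]) = f P \<or> f P = top (P ! i)"
    and "D \<subseteq> lin_orders A" "A \<noteq> {}"
  shows "locally_sp D n f"
  unfolding locally_sp_def
proof (intro ballI allI impI)
  fix P i Q assume h: "P \<in> profiles D n" "i < n" "Q \<in> D" "adjacent (P ! i) Q"
  have d: "distinct (P ! i)" using lin_facts[OF prof_nth[OF h(1,2)] assms(2,3)] by simp
  from assms(1)[OF h] show "\<not> prefers (P ! i) (f (P[i := Q])) (f P)"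
    using not_prefers_top[OF d] not_prefers_refl[OF d] by auto
qed


lemma caseA:
  assumes DA: "D \<subseteq> lin_orders A" and mr: "minimally_rich A D" and two: "\<And>x. \<exists>c\<in>A. c \<noteq> x"
    and n2: "n \<ge> 2" and CD: "C \<subseteq> D" and pC: "p \<in> C" and qD: "q \<in> D" and qC: "q \<notin> C"
    and cl1: "\<And>x y. x \<in> C \<Longrightarrow> y \<in> D \<Longrightarrow> adjacent x y \<Longrightarrow> y \<in> C"
  shows "\<exists>f. is_scf A D n f \<and> unanimous D n f \<and> locally_sp D n f \<and> \<not> dictatorial D n f"
proof -
  have Ane: "A \<noteq> {}" using two by blast
  define f where "f = (\<lambda>P::'a list list. if P ! 0 \<in> C then top (P ! 0) else top (P ! 1))"
  have scf: "is_scf A D n f" unfolding is_scf_def f_def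
    using prof_nth[of _ D n 0] prof_nth[of _ D n 1] n2 lin_facts(4)[OF _ DA Ane] by auto
  have un: "unanimous D n f" unfolding unanimous_def f_def using n2 by auto
  have lsp: "locally_sp D n f"
  proof (rule lsp_generic[OF _ DA Ane])
    fix P i Q assume h: "P \<in> profiles D n" "i < n" "Q \<in> D" "adjacent (P ! i) Q"
    have len: "length P = n" using h(1) unfolding profiles_def by auto
    show "f (P[i := Q]) = f P \<or> f P = top (P ! i)"
    proof (cases "i = 0")
      case True
      show ?thesis
      proof (cases "P ! 0 \<in> C")
        case True then show ?thesis using \<open>i = 0\<close> by (simp add: f_def)
      next
        case False
        have "Q \<notin> C"
        proof
          assume "Q \<in> C"
          then have "P ! 0 \<in> C" using cl1[OF _ prof_nth[OF h(1) h(2)] adj_sym[OF h(4)]] \<open>i = 0\<close> by simp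
          then show False using False by simp
        qed
        then show ?thesis using False \<open>i = 0\<close> len n2 by (simp add: f_def)
      qed
    next
      case False
      then show ?thesis using len n2 h(2) by (cases "i = 1") (auto simp: f_def)
    qed
  qed
  have nd: "\<not> dictatorial D n f"
    unfolding dictatorial_def
  proof (intro notI, elim exE conjE)
    fix i assume i: "i < n" and dic: "\<forall>P\<in>profiles D n. f P = top (P ! i)"
    show False
    proof (cases "i = 0")
      case True
      obtain c where c: "c \<in> A" "c \<noteq> top q" using two by blast
      then obtain r where r: "r \<in> D" "top r = c" using mr unfolding minimally_rich_def by blast
      let ?P = "(replicate n r)[0 := q]"
      have "?P \<in> profiles D n" using prof_upd[OF r(1) qD] .
      then have "f ?P = top (?P ! 0)" using dic True by simp
      then show False using qC c r n2 by (simp add: f_def)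
    next
      case False
      obtain c where c: "c \<in> A" "c \<noteq> top p" using two by blast
      then obtain r where r: "r \<in> D" "top r = c" using mr unfolding minimally_rich_def by blast
      let ?P = "(replicate n p)[i := r]"
      have "?P \<in> profiles D n" using prof_upd[OF _ r(1)] pC CD by auto
      then have "f ?P = top (?P ! i)" using dic by simp
      then show False using pC c r n2 i False by (simp add: f_def)
    qed
  qed
  show ?thesis using scf un lsp nd by blast
qed


lemma caseB:
  assumes DA: "D \<subseteq> lin_orders A" and mr: "minimally_rich A D"
    and three: "\<exists>c\<in>A. c \<noteq> a \<and> c \<noteq> b"
    and n2: "n \<ge> 2" and SD: "S \<subseteq> D" and pS: "p \<in> S" and topS: "\<And>x. x \<in> S \<Longrightarrow> top x = a"
    and ab: "a \<noteq> b" and bA: "b \<in> A"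
    and nb: "\<And>x y. y \<in> S \<Longrightarrow> x \<in> D \<Longrightarrow> x \<notin> S \<Longrightarrow> adjacent y x \<Longrightarrow> top x = b"
  shows "\<exists>f. is_scf A D n f \<and> unanimous D n f \<and> locally_sp D n f \<and> \<not> dictatorial D n f"
proof -
  have Ane: "A \<noteq> {}" using bA by blast
  have aA: "a \<in> A" using topS[OF pS] lin_facts(4)[OF _ DA Ane] pS SD by auto
  define f where "f = (\<lambda>P::'a list list. if P ! 0 \<in> S then (if prefers (P ! 1) a b then a else b) else top (P ! 0))"
  have scf: "is_scf A D n f" unfolding is_scf_def f_def
    using prof_nth[of _ D n 0] n2 lin_facts(4)[OF _ DA Ane] aA bA by auto
  have un: "unanimous D n f" unfolding unanimous_def
  proof (intro ballI allI impI)
    fix P c assume h: "P \<in> profiles D n" "\<forall>i<n. top (P ! i) = c"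
    show "f P = c"
    proof (cases "P ! 0 \<in> S")
      case True
      then have ca: "c = a" using topS h(2) n2 by force
      have P1: "P ! 1 \<in> D" using prof_nth[OF h(1)] n2 by simp
      have "prefers (P ! 1) a b"
        using prefers_top[OF lin_facts(1)[OF P1 DA Ane], of b] lin_facts(2)[OF P1 DA Ane]
          h(2) n2 ca ab bA by auto
      then show ?thesis using True ca by (simp add: f_def)
    next
      case False then show ?thesis using h(2) n2 by (simp add: f_def)
    qed
  qed
  have lsp: "locally_sp D n f"
    unfolding locally_sp_def
  proof (intro ballI allI impI)
    fix P i Q assume h: "P \<in> profiles D n" "i < n" "Q \<in> D" "adjacent (P ! i) Q"
    have len: "length P = n" using h(1) unfolding profiles_def by auto
    have Pi: "P ! i \<in> D" using prof_nth[OF h(1,2)] .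
    have d: "distinct (P ! i)" using lin_facts(1)[OF Pi DA Ane] .
    have gen: "f (P[i := Q]) = f P \<or> f P = top (P ! i) \<Longrightarrow> \<not> prefers (P ! i) (f (P[i := Q])) (f P)"
      using not_prefers_top[OF d] not_prefers_refl[OF d] by auto
    show "\<not> prefers (P ! i) (f (P[i := Q])) (f P)"
    proof (cases "i = 0")
      case True
      show ?thesis
      proof (rule gen, cases "P ! 0 \<in> S")
        case T: True
        have ta: "top (P ! 0) = a" using topS T by simp
        show "f (P[i := Q]) = f P \<or> f P = top (P ! i)"
        proof (cases "Q \<in> S")
          case True then show ?thesis using T \<open>i = 0\<close> len n2 by (simp add: f_def)
        next
          case False
          have "top Q = b" using nb[OF T h(3) False] h(4) \<open>i = 0\<close> by simp
          then show ?thesis using T False \<open>i = 0\<close> len n2 ta by (simp add: f_def)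
        qed
      next
        case F: False
        show "f (P[i := Q]) = f P \<or> f P = top (P ! i)"
        proof (cases "Q \<in> S")
          case True
          have "top (P ! 0) = b" using nb[of Q "P ! 0"] True F adj_sym[OF h(4)] Pi \<open>i = 0\<close> by simp
          then show ?thesis using F True \<open>i = 0\<close> len n2 by (simp add: f_def)
        next
          case False then show ?thesis using F \<open>i = 0\<close> len n2 by (simp add: f_def)
        qed
      qed
    next
      case False
      show ?thesis
      proof (cases "i = 1")
        case False
        then have "f (P[i := Q]) = f P" using \<open>i \<noteq> 0\<close> by (simp add: f_def)
        then show ?thesis using not_prefers_refl[OF d] by simp
      next
        case True
        show ?thesis
        proof (cases "P ! 0 \<in> S")
          case False
          then have "f (P[i := Q]) = f P" using \<open>i \<noteq> 0\<close> by (simp add: f_def)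
          then show ?thesis using not_prefers_refl[OF d] by simp
        next
          case T: True
          have e1: "(P[i := Q]) ! 0 = P ! 0" using \<open>i \<noteq> 0\<close> by simp
          show ?thesis
          proof (cases "prefers (P ! 1) a b")
            case True
            then show ?thesis using T e1 prefers_asym[OF d] not_prefers_refl[OF d] \<open>i = 1\<close>
              by (auto simp: f_def)
          next
            case False
            then show ?thesis using T e1 not_prefers_refl[OF d] \<open>i = 1\<close>
              by (auto simp: f_def)
          qed
        qed
      qed
    qed
  qed
  have nd: "\<not> dictatorial D n f"
    unfolding dictatorial_def
  proof (intro notI, elim exE conjE)
    fix i assume i: "i < n" and dic: "\<forall>P\<in>profiles D n. f P = top (P ! i)"
    show False
    proof (cases "i = 0")
      case True
      obtain r where r: "r \<in> D" "top r = b" using mr bA unfolding minimally_rich_def by blast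
      have dr: "distinct r" using lin_facts(1)[OF r(1) DA Ane] .
      let ?P = "(replicate n r)[0 := p]"
      have "?P \<in> profiles D n" using prof_upd[OF r(1)] pS SD by auto
      then have "f ?P = top (?P ! 0)" using dic True by simp
      then show False using pS r n2 not_prefers_top[OF dr, of a] topS[OF pS] ab by (simp add: f_def)
    next
      case False
      obtain c where c: "c \<in> A" "c \<noteq> a" "c \<noteq> b" using three by blast
      then obtain r where r: "r \<in> D" "top r = c" using mr unfolding minimally_rich_def by blast
      let ?P = "(replicate n p)[i := r]"
      have "?P \<in> profiles D n" using prof_upd[OF _ r(1)] pS SD by auto
      then have "f ?P = top (?P ! i)" using dic by simp
      then show False using pS c r n2 i False by (simp add: f_def split: if_splits)
    qed
  qed
  show ?thesis using scf un lsp nd by blast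
qed


lemma card3:
  assumes "finite A" "card A \<ge> 3"
  shows "\<exists>c\<in>A. c \<noteq> a \<and> c \<noteq> b"
proof (rule ccontr)
  assume "\<not> ?thesis"
  then have "A \<subseteq> {a, b}" by auto
  then have "card A \<le> card {a, b}" by (simp add: card_mono)
  also have "\<dots> \<le> 2" by (simp add: card_insert_if)
  finally show False using assms(2) by simp
qed

theorem theorem1:
  fixes A :: "'a set" and D :: "'a list set" and n :: nat
  assumes "finite A" and "card A \<ge> 3" and "n \<ge> 2"
    and "D \<subseteq> lin_orders A" and "minimally_rich A D"
    and "\<forall>f. is_scf A D n f \<and> unanimous D n f \<and> locally_sp D n f \<longrightarrow> dictatorial D n f"
  shows "connected_two_neighbours D"
proof (rule ccontr)
  assume neg: "\<not> connected_two_neighbours D"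
  have two: "\<And>x. \<exists>c\<in>A. c \<noteq> x" using card3[OF assms(1,2)] by blast
  have Ane: "A \<noteq> {}" using two by blast
  have ex: "\<exists>f. is_scf A D n f \<and> unanimous D n f \<and> locally_sp D n f \<and> \<not> dictatorial D n f"
  proof (cases "dom_connected D")
    case False
    define R where "R = (\<lambda>x y. x \<in> D \<and> y \<in> D \<and> adjacent x y)"
    obtain p q where pq: "p \<in> D" "q \<in> D" "\<not> R\<^sup>*\<^sup>* p q"
      using False rtranclp_path[of D] unfolding dom_connected_def R_def by blast
    define C where "C = {x \<in> D. R\<^sup>*\<^sup>* p x}"
    show ?thesis
    proof (rule caseA[OF assms(4,5) two assms(3), of C p q])
      show "C \<subseteq> D" unfolding C_def by auto
      show "p \<in> C" unfolding C_def using pq by auto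
      show "q \<in> D" by fact
      show "q \<notin> C" unfolding C_def using pq by auto
      fix x y assume "x \<in> C" "y \<in> D" "adjacent x y"
      then show "y \<in> C" unfolding C_def R_def
        by (auto intro: rtranclp.rtrancl_into_rtrancl)
    qed
  next
    case True
    then obtain p where pD: "p \<in> D" and
      nn: "\<not> (\<exists>q r. neighbour D (TCC D p) q \<and> neighbour D (TCC D p) r \<and> top q \<noteq> top r)"
      using neg unfolding connected_two_neighbours_def by blast
    define S where "S = TCC D p"
    define a where "a = top p"
    have SD: "S \<subseteq> D" unfolding S_def TCC_def using pD by auto
    have pS: "p \<in> S" unfolding S_def TCC_def by auto
    have topS: "\<And>x. x \<in> S \<Longrightarrow> top x = a"
    proof -
      fix x assume "x \<in> S"
      then have "x = p \<or> top_connected D p x" unfolding S_def TCC_def by auto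
      then show "top x = a"
      proof
        assume "top_connected D p x"
        then obtain ps where "is_path D ps" "last ps = x" "\<forall>y\<in>set ps. top y = top p"
          unfolding top_connected_def by blast
        then show ?thesis unfolding a_def is_path_def by auto
      qed (simp add: a_def)
    qed
    have nbS: "\<And>y. neighbour D S y \<Longrightarrow> top y \<noteq> a"
    proof
      fix y assume nb: "neighbour D S y" and ya: "top y = a"
      then obtain s where s: "s \<in> S" "adjacent s y" "y \<in> D" "y \<notin> S"
        unfolding neighbour_def by auto
      obtain ps where ps: "is_path D ps" "hd ps = p" "last ps = s" "\<forall>z\<in>set ps. top z = a"
      proof (cases "s = p")
        case True
        have "is_path D [p]" using pD unfolding is_path_def by auto
        then show ?thesis using that True a_def by auto
      next
        case False
        then have "top_connected D p s" using s(1) unfolding S_def TCC_def by auto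
        then show ?thesis using that unfolding top_connected_def a_def by blast
      qed
      obtain ps' where ps': "is_path D ps'" "hd ps' = p" "last ps' = y" "set ps' \<subseteq> insert y (set ps)"
        using path_snoc[OF ps(1) s(3)] s(2) ps(2,3) by auto
      have "top_connected D p y" unfolding top_connected_def
        using ps' ps(4) ya a_def by (intro exI[of _ ps']) auto
      then have "y \<in> S" using s(3) unfolding S_def TCC_def by auto
      then show False using s(4) by simp
    qed
    obtain b where bA: "b \<in> A" and ab: "a \<noteq> b" and allb: "\<And>y. neighbour D S y \<Longrightarrow> top y = b"
    proof (cases "\<exists>y. neighbour D S y")
      case True
      then obtain y where y: "neighbour D S y" by blast
      have "y \<in> D" using y unfolding neighbour_def by auto
      then have "top y \<in> A" using lin_facts(4)[OF _ assms(4) Ane] by auto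
      moreover have "\<And>z. neighbour D S z \<Longrightarrow> top z = top y" using nn y unfolding S_def by blast
      ultimately show ?thesis using that nbS[OF y] by metis
    next
      case False
      obtain c where "c \<in> A" "c \<noteq> a" using two by blast
      then show ?thesis using that False by metis
    qed
    show ?thesis
    proof (rule caseB[OF assms(4,5) card3[OF assms(1,2)] assms(3) SD pS topS ab bA])
      fix x y assume "y \<in> S" "x \<in> D" "x \<notin> S" "adjacent y x"
      then have "neighbour D S x" unfolding neighbour_def by auto
      then show "top x = b" by (rule allb)
    qed
  qed
  then show False using assms(6) by blast
qed

end
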